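(* Let $N\ge5$ be odd. Let $h=(h_\alpha,h_\beta,h_1,\dots,h_{N-1})$ and $h'=(h'_\alpha,h'_\beta,h'_1,\dots,h'_{N-1})$ be real parameter vectors with all entries nonzero, and let $S$ be a real nonsingular $(N+1)\times(N+1)$ matrix satisfying $$S\tilde A(h)=\tilde A(h')S,\qquad Se_1=e_1,\qquad e_2^TS=e_2^T,$$ where $\tilde A$ is defined in the context. Then for every $k$ with $3\le k\le N-1$, the first $k$ columns of $S$ are $e_1,\ e_2,\ \varepsilon_3e_3,\ \dots,\ \varepsilon_ke_k$ with $\varepsilon_j\in\{1,-1\}$, and moreover $h_\alpha=h'_\alpha$, $|h_\beta|=|h'_\beta|$ and $|h_j|=|h'_j|$ for all $1\le j\le k-2$.
   Context: For an integer $N\ge1$ and real parameters $h=(h_\alpha,h_\beta,h_1,\dots,h_{N-1})$, set $(c_1,c_2,c_3,\dots,c_{N+1})=(h_\alpha,h_\beta,h_1,\dots,h_{N-1})$ and let $A(h)$ be the real $(N+2)\times(N+2)$ tridiagonal matrix with $A_{j,j+1}=c_j$, $A_{j+1,j}=-c_j$ for $j=1,\dots,N+1$ and all other entries zero. For odd $N$ and all parameters nonzero, define the $(N+1)\times(N+1)$ matrix $\tilde A(h)$ as follows (with the conventions $h_{-1}:=h_\alpha$, $h_0:=h_\beta$): its first $N$ columns coincide with the first $N$ columns of the leading $(N+1)\times(N+1)$ principal submatrix of $A(h)$, i.e. $\tilde A_{jl}=A_{jl}$ for $1\le j\le N+1$, $1\le l\le N$; its last column has $\tilde A_{k,N+1}=0$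 for even $k$ and, for odd $k=2i-1$ ($1\le i\le (N+1)/2$), $$\tilde A_{2i-1,N+1}=h_{N-1}^2\,\frac{\prod_{j=i}^{(N-1)/2}h_{2j-2}}{\prod_{j=i}^{(N+1)/2}h_{2j-3}}+\delta_{i,(N+1)/2}\,h_{N-2}.$$ (In particular $\tilde A_{N,N+1}=h_{N-2}+h_{N-1}^2/h_{N-2}$ and $\tilde A_{N+1,N+1}=0$.) This matrix is the system matrix of the minimal (observable) subsystem obtained from $(A,e_1,e_2^T)$ for odd $N$. $e_j$ denotes the $j$-th standard basis vector; empty products equal $1$. *)

theory Defs
  imports "Jordan_Normal_Form.Matrix" "Jordan_Normal_Form.Determinant"
begin

(* Parameter vector h = (h_alpha, h_beta, h_1, ..., h_{N-1}) is encoded as c :: nat => real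
   with (c 1, c 2, c 3, ..., c (N+1)) = (h_alpha, h_beta, h_1, ..., h_{N-1}),
   i.e. h_m = c (m+2) for m >= -1 (h_{-1} = h_alpha, h_0 = h_beta).
   Matrices are Jordan_Normal_Form matrices with 0-based indices: paper entry (j,l) is
   entry (j-1,l-1) here. *)

definition Atilde :: "nat \<Rightarrow> (nat \<Rightarrow> real) \<Rightarrow> real mat" where
  "Atilde N c = mat (N+1) (N+1) (\<lambda>(r, s).
     let j = r + 1; l = s + 1 in
     if l \<le> N then
       (if l = j + 1 then c j else if j = l + 1 then - c l else 0)
     else
       (if even j then 0 else
          (let i = (j + 1) div 2 in
            (c (N+1))^2 * (\<Prod>q\<in>{i..(N-1) div 2}. c (2*q))
                        / (\<Prod>q\<in>{i..(N+1) div 2}. c (2*q - 1))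
            + (if i = (N+1) div 2 then c N else 0))))"

end

theory Submission imports Defs begin

definition zz :: "nat \<Rightarrow> (nat \<Rightarrow> real) \<Rightarrow> nat \<Rightarrow> real" where
  "zz N c r = (if even r then (\<Prod>q\<in>{(r+2) div 2..(N-1) div 2}. c (2*q))
        / (\<Prod>q\<in>{(r+2) div 2..(N+1) div 2}. c (2*q - 1)) else 0)"

lemma At_carrier[simp]: "Atilde N c \<in> carrier_mat (N+1) (N+1)"
  unfolding Atilde_def by simp

lemma At_dim[simp]: "dim_row (Atilde N c) = N+1" "dim_col (Atilde N c) = N+1"
  unfolding Atilde_def by simp_all

lemma At_entry:
  assumes "odd N" "r \<le> N" "s \<le> N"
  shows "Atilde N c $$ (r,s) = (if s < N then (if s = r+1 then c (r+1) else if r = s+1 then - c (s+1) else 0)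
     else c (N+1)^2 * zz N c r + (if r = N - 1 then c N else 0))"
proof (cases "s < N")
  case True
  then show ?thesis using assms unfolding Atilde_def by (auto simp: Let_def)
next
  case False
  hence s: "s = N" using assms by simp
  show ?thesis
  proof (cases "even r")
    case True
    have "((r + 1 + 1) div 2 = (N + 1) div 2) = (r = N - 1)" using True assms by presburger
    moreover have "(r+1+1) div 2 = (r+2) div 2" by simp
    ultimately show ?thesis using assms s True unfolding Atilde_def zz_def by (auto simp: Let_def)
  next
    case False
    then have "r \<noteq> N - 1" using assms by presburger
    then show ?thesis using assms s False unfolding Atilde_def zz_def by (auto simp: Let_def)
  qed
qed

lemma sum_col:
  assumes "odd N" "s < N"
  shows "(\<Sum>r<N+1. f r * Atilde N c $$ (r,s)) = (if 1 \<le> s then c s * f (s-1) else 0) - c (s+1) * f (s+1)"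
proof -
  have "(\<Sum>r<N+1. f r * Atilde N c $$ (r,s)) =
     (\<Sum>r<N+1. (if r = s - 1 \<and> 1 \<le> s then c s * f (s-1) else 0) + (if r = s+1 then - c (s+1) * f (s+1) else 0))"
    by (rule sum.cong, simp, subst At_entry, use assms in auto)
  also have "\<dots> = (\<Sum>r<N+1. (if r = s - 1 \<and> 1 \<le> s then c s * f (s-1) else 0)) + (\<Sum>r<N+1. (if r = s+1 then - c (s+1) * f (s+1) else 0))"
    by (rule sum.distrib)
  also have "(\<Sum>r<N+1. (if r = s+1 then - c (s+1) * f (s+1) else 0)) = - c (s+1) * f (s+1)"
    using assms by (simp add: sum.delta)
  also have "(\<Sum>r<N+1. (if r = s - 1 \<and> 1 \<le> s then c s * f (s-1) else 0)) = (if 1 \<le> s then c s * f (s-1) else 0)"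
    using assms by (cases "1 \<le> s") (simp_all add: sum.delta)
  finally show ?thesis by simp
qed

lemma sum_last:
  assumes "odd N"
  shows "(\<Sum>r<N+1. f r * Atilde N c $$ (r,N)) = c (N+1)^2 * (\<Sum>r<N+1. f r * zz N c r) + c N * f (N-1)"
proof -
  have "(\<Sum>r<N+1. f r * Atilde N c $$ (r,N)) =
     (\<Sum>r<N+1. c (N+1)^2 * (f r * zz N c r) + (if r = N - 1 then c N * f (N-1) else 0))"
    by (rule sum.cong, simp, subst At_entry, use assms in \<open>auto simp: algebra_simps\<close>)
  also have "\<dots> = c (N+1)^2 * (\<Sum>r<N+1. f r * zz N c r) + c N * f (N-1)"
    by (simp only: sum.distrib sum_distrib_left[symmetric]) (simp add: sum.delta)
  finally show ?thesis .
qed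

lemma zz_odd: "odd r \<Longrightarrow> zz N c r = 0" unfolding zz_def by simp

lemma zz_last: assumes "odd N" "c N \<noteq> 0" shows "zz N c (N-1) = 1 / c N"
proof -
  have a: "(N-1+2) div 2 = (N+1) div 2" using assms by presburger
  have b: "{(N+1) div 2..(N-1) div 2} = {}" using assms by auto
  have d: "2 * ((N+1) div 2) - 1 = N" using assms by presburger
  show ?thesis using assms unfolding zz_def a b by (simp add: d)
qed

lemma zz_step:
  assumes "odd N" "odd r" "r + 1 < N" "\<forall>j\<in>{1..N+1}. c j \<noteq> 0"
  shows "c r * zz N c (r-1) = c (r+1) * zz N c (r+1)"
proof -
  define i where "i = (r+1) div 2"
  have i1: "(r - 1 + 2) div 2 = i" using assms unfolding i_def by presburger
  have i2: "(r + 1 + 2) div 2 = Suc i" using assms unfolding i_def by presburger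
  have iM: "i \<le> (N-1) div 2" "i \<le> (N+1) div 2" using assms unfolding i_def by presburger+
  have e1: "2 * i = r + 1" "2*i - 1 = r" using assms unfolding i_def by presburger+
  have p1: "(\<Prod>q\<in>{i..(N-1) div 2}. c (2*q)) = c (r+1) * (\<Prod>q\<in>{Suc i..(N-1) div 2}. c (2*q))"
    using iM by (subst prod.atLeast_Suc_atMost) (simp_all add: e1)
  have p2: "(\<Prod>q\<in>{i..(N+1) div 2}. c (2*q-1)) = c r * (\<Prod>q\<in>{Suc i..(N+1) div 2}. c (2*q-1))"
    using iM by (subst prod.atLeast_Suc_atMost) (simp_all add: e1)
  have cr: "c r \<noteq> 0" using assms by (cases r) auto
  have ev: "even (r-1)" "even (r+1)" using assms by presburger+
  show ?thesis unfolding zz_def i1 i2 using ev p1 p2 cr by simp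
qed

lemma AZ:
  assumes "odd N" "\<forall>j\<in>{1..N+1}. c j \<noteq> 0" "r \<le> N"
  shows "(\<Sum>p<N+1. Atilde N c $$ (r,p) * zz N c p) = (if r = N then -1 else 0)"
proof -
  have "(\<Sum>p<N+1. Atilde N c $$ (r,p) * zz N c p) = (\<Sum>p<N. Atilde N c $$ (r,p) * zz N c p)"
    using assms by (simp add: zz_odd)
  also have "\<dots> = (\<Sum>p<N. (if p = r + 1 then c (r+1) * zz N c (r+1) else 0) + (if p = r - 1 \<and> 1 \<le> r then - c r * zz N c (r-1) else 0))"
    by (rule sum.cong, simp, subst At_entry, use assms in auto)
  also have "\<dots> = (if r + 1 < N then c (r+1) * zz N c (r+1) else 0) + (if 1 \<le> r then - c r * zz N c (r-1) else 0)"
    using assms by (cases "1 \<le> r") (auto simp: sum.distrib sum.delta)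
  also have "\<dots> = (if r = N then -1 else 0)"
  proof (cases "r = N")
    case True
    then show ?thesis using assms zz_last[of N c] by (cases N) auto
  next
    case False
    show ?thesis
    proof (cases "even r")
      case True
      then show ?thesis using False assms by (auto simp: zz_odd)
    next
      case o: False
      then have "r + 1 \<noteq> N" using assms by presburger
      then have "r + 1 < N" using False assms by simp
      then show ?thesis using zz_step[of N r c] o assms False by (cases r) auto
    qed
  qed
  finally show ?thesis .
qed


fun ww :: "nat \<Rightarrow> (nat \<Rightarrow> real) \<Rightarrow> nat \<Rightarrow> real vec" where
  "ww N c 0 = unit_vec (N+1) 1"
| "ww N c (Suc m) = transpose_mat (Atilde N c) *\<^sub>v ww N c m"

lemma ww_dim[simp]: "dim_vec (ww N c m) = N+1"
  by (induction m) simp_all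

lemma ww_carrier[simp]: "ww N c m \<in> carrier_vec (N+1)"
  unfolding carrier_vec_def by simp

declare ww.simps(2)[simp del]

lemma ww_comp:
  assumes "p \<le> N"
  shows "ww N c (Suc m) $ p = (\<Sum>r<N+1. ww N c m $ r * Atilde N c $$ (r,p))"
proof -
  have "ww N c (Suc m) $ p = col (Atilde N c) p \<bullet> ww N c m" using assms by (simp add: ww.simps(2))
  also have "\<dots> = (\<Sum>r<N+1. ww N c m $ r * Atilde N c $$ (r,p))"
    unfolding scalar_prod_def using assms by (auto simp: atLeast0LessThan mult.commute intro!: sum.cong)
  finally show ?thesis .
qed

lemma ww_col:
  assumes "odd N" "p < N"
  shows "ww N c (Suc m) $ p = (if 1 \<le> p then c p * ww N c m $ (p-1) else 0) - c (p+1) * ww N c m $ (p+1)"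
  using assms by (simp only: ww_comp[of p N c m] sum_col[OF assms])

definition psi :: "nat \<Rightarrow> (nat \<Rightarrow> real) \<Rightarrow> real vec \<Rightarrow> real" where
  "psi N c w = (\<Sum>r<N+1. w $ r * zz N c r)"

lemma psi_step:
  assumes "odd N" "\<forall>j\<in>{1..N+1}. c j \<noteq> 0"
  shows "psi N c (ww N c (Suc m)) = - ww N c m $ N"
proof -
  have "psi N c (ww N c (Suc m)) = (\<Sum>p<N+1. (\<Sum>r<N+1. ww N c m $ r * Atilde N c $$ (r,p)) * zz N c p)"
    unfolding psi_def by (rule sum.cong) (auto simp: ww_comp)
  also have "\<dots> = (\<Sum>p<N+1. \<Sum>r<N+1. ww N c m $ r * (Atilde N c $$ (r,p) * zz N c p))"
    by (simp only: sum_distrib_right mult.assoc)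
  also have "\<dots> = (\<Sum>r<N+1. \<Sum>p<N+1. ww N c m $ r * (Atilde N c $$ (r,p) * zz N c p))"
    by (rule sum.swap)
  also have "\<dots> = (\<Sum>r<N+1. ww N c m $ r * (if r = N then -1 else 0))"
    by (rule sum.cong) (use assms AZ in \<open>auto simp: sum_distrib_left[symmetric]\<close>)
  also have "\<dots> = - ww N c m $ N"
    by (simp add: sum.delta if_distrib cong: if_cong)
  finally show ?thesis .
qed

lemma ww_last:
  assumes "odd N"
  shows "ww N c (Suc m) $ N = c (N+1)^2 * psi N c (ww N c m) + c N * ww N c m $ (N-1)"
  unfolding psi_def by (simp only: ww_comp[of N N c m] sum_last[OF assms] order.refl)

lemma obs:
  assumes "odd N" "N \<ge> 3" "\<forall>j\<in>{1..N+1}. c j \<noteq> 0" "m \<le> N - 2"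
  shows "(\<forall>p. m+1 < p \<and> p \<le> N \<longrightarrow> ww N c m $ p = 0) \<and> ww N c m $ (m+1) = (\<Prod>i\<in>{2..m+1}. c i)
     \<and> psi N c (ww N c m) = 0"
  using assms(4)
proof (induction m)
  case 0
  have "psi N c (ww N c 0) = 0" unfolding psi_def using assms by (auto simp: zz_odd intro!: sum.neutral)
  then show ?case using assms by auto
next
  case (Suc m)
  then have IH: "\<forall>p. m+1 < p \<and> p \<le> N \<longrightarrow> ww N c m $ p = 0" "ww N c m $ (m+1) = (\<Prod>i\<in>{2..m+1}. c i)"
     "psi N c (ww N c m) = 0" by auto
  have mN: "m + 3 \<le> N" using Suc.prems assms by simp
  have A: "\<forall>p. m+2 < p \<and> p \<le> N \<longrightarrow> ww N c (Suc m) $ p = 0"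
  proof (intro allI impI)
    fix p assume p: "m+2 < p \<and> p \<le> N"
    show "ww N c (Suc m) $ p = 0"
    proof (cases "p < N")
      case True
      moreover have "ww N c m $ (p-1) = 0" by (rule IH(1)[rule_format]) (use p True in linarith)
      moreover have "ww N c m $ (p+1) = 0" by (rule IH(1)[rule_format]) (use p True in linarith)
      ultimately show ?thesis using p by (simp add: ww_col[OF assms(1)])
    next
      case False
      then have "p = N" using p by simp
      then show ?thesis using p IH mN by (simp add: ww_last[OF assms(1)])
    qed
  qed
  have B: "ww N c (Suc m) $ (m+2) = (\<Prod>i\<in>{2..m+2}. c i)"
  proof -
    have "ww N c (Suc m) $ (m+2) = c (m+2) * ww N c m $ (m+1)"
      using mN IH(1) by (simp add: ww_col[OF assms(1)])
    also have "\<dots> = (\<Prod>i\<in>{2..m+2}. c i)" using IH(2)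
      by (simp add: prod.cl_ivl_Suc mult.commute)
    finally show ?thesis .
  qed
  have C: "psi N c (ww N c (Suc m)) = 0"
    using psi_step[OF assms(1,3)] IH(1) mN by simp
  show ?case using A B C by simp
qed


lemma Tmult_comp:
  assumes "S \<in> carrier_mat (N+1) (N+1)" "p \<le> N" "dim_vec v = N+1"
  shows "(transpose_mat S *\<^sub>v v) $ p = (\<Sum>r<N+1. S $$ (r,p) * v $ r)"
proof -
  have "(transpose_mat S *\<^sub>v v) $ p = col S p \<bullet> v" using assms by simp
  also have "\<dots> = (\<Sum>r<N+1. S $$ (r,p) * v $ r)"
    unfolding scalar_prod_def assms(3) atLeast0LessThan using assms by (intro sum.cong) auto
  finally show ?thesis .
qed

lemma mult_comp:
  assumes "A \<in> carrier_mat (N+1) (N+1)" "B \<in> carrier_mat (N+1) (N+1)" "i \<le> N" "j \<le> N"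
  shows "(A * B) $$ (i,j) = (\<Sum>r<N+1. A $$ (i,r) * B $$ (r,j))"
proof -
  have "(A * B) $$ (i,j) = row A i \<bullet> col B j" using assms by simp
  also have "\<dots> = (\<Sum>r<N+1. A $$ (i,r) * B $$ (r,j))"
    unfolding scalar_prod_def using assms by (intro sum.cong) auto
  finally show ?thesis .
qed

lemma ww_rel:
  assumes S: "S \<in> carrier_mat (N+1) (N+1)" and E: "S * Atilde N c = Atilde N c' * S"
    and T: "transpose_mat S *\<^sub>v unit_vec (N+1) 1 = unit_vec (N+1) 1"
  shows "ww N c m = transpose_mat S *\<^sub>v ww N c' m"
proof (induction m)
  case 0
  then show ?case using T by simp
next
  case (Suc m)
  have TA: "transpose_mat (Atilde N c) * transpose_mat S = transpose_mat S * transpose_mat (Atilde N c')"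
    using transpose_mult[OF S At_carrier[of N c]] transpose_mult[OF At_carrier[of N c'] S] E by simp
  have "ww N c (Suc m) = transpose_mat (Atilde N c) *\<^sub>v (transpose_mat S *\<^sub>v ww N c' m)"
    by (simp add: ww.simps(2) Suc)
  also have "\<dots> = (transpose_mat (Atilde N c) * transpose_mat S) *\<^sub>v ww N c' m"
    using S ww_carrier[of N c' m] by (subst assoc_mult_mat_vec[of _ "N+1" "N+1" _ "N+1"]) auto
  also have "\<dots> = (transpose_mat S * transpose_mat (Atilde N c')) *\<^sub>v ww N c' m" using TA by simp
  also have "\<dots> = transpose_mat S *\<^sub>v ww N c' (Suc m)"
    using S ww_carrier[of N c' m] by (subst assoc_mult_mat_vec[of _ "N+1" "N+1" _ "N+1"]) (auto simp: ww.simps(2))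
  finally show ?case .
qed


theorem lemma5:
  fixes N :: nat and c c' :: "nat \<Rightarrow> real" and S :: "real mat"
  assumes "odd N" and "N \<ge> 5"
    and "\<forall>j\<in>{1..N+1}. c j \<noteq> 0"
    and "\<forall>j\<in>{1..N+1}. c' j \<noteq> 0"
    and "S \<in> carrier_mat (N+1) (N+1)"
    and "det S \<noteq> 0"
    and "S * Atilde N c = Atilde N c' * S"
    and "S *\<^sub>v unit_vec (N+1) 0 = unit_vec (N+1) 0"
    and "transpose_mat S *\<^sub>v unit_vec (N+1) 1 = unit_vec (N+1) 1"
  shows "\<forall>k. 3 \<le> k \<and> k \<le> N - 1 \<longrightarrow>
           (col S 0 = unit_vec (N+1) 0 \<and> col S 1 = unit_vec (N+1) 1 \<and>
            (\<exists>\<epsilon> :: nat \<Rightarrow> real. \<forall>j\<in>{3..k}.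
                 \<epsilon> j \<in> {1, -1} \<and> col S (j - 1) = \<epsilon> j \<cdot>\<^sub>v unit_vec (N+1) (j - 1)))
           \<and> c 1 = c' 1 \<and> \<bar>c 2\<bar> = \<bar>c' 2\<bar>
           \<and> (\<forall>j\<in>{1..k-2}. \<bar>c (j+2)\<bar> = \<bar>c' (j+2)\<bar>)"
proof -
  note oN = assms(1)
  note cnz = assms(3) and c'nz = assms(4)
  note Sc = assms(5)
  define l where "l p = S $$ (p,p)" for p
  have col0: "S $$ (i,0) = (if i = 0 then 1 else 0)" if "i \<le> N" for i
  proof -
    have "(S *\<^sub>v unit_vec (N+1) 0) $ i = unit_vec (N+1) 0 $ i" using assms(8) by simp
    then show ?thesis using that Sc by simp
  qed
  have row1: "S $$ (1,j) = (if j = 1 then 1 else 0)" if "j \<le> N" for j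
  proof -
    have "(transpose_mat S *\<^sub>v unit_vec (N+1) 1) $ j = unit_vec (N+1) 1 $ j" using assms(9) by simp
    then show ?thesis using that Sc assms(2) by simp
  qed
  have EQ: "(\<Sum>r<N+1. S $$ (i,r) * Atilde N c $$ (r,s)) = (\<Sum>r<N+1. Atilde N c' $$ (i,r) * S $$ (r,s))"
    if "i \<le> N" "s \<le> N" for i s
    using mult_comp[OF Sc At_carrier[of N c] that] mult_comp[OF At_carrier[of N c'] Sc that] assms(7) by simp
  have CE: "(if 1 \<le> s then c s * S $$ (i, s-1) else 0) - c (s+1) * S $$ (i, s+1) = l s * Atilde N c' $$ (i,s)"
    if "i \<le> N" "s < N" "\<forall>r\<le>N. S $$ (r,s) = (if r = s then l s else 0)" for i s
  proof -
    have "(if 1 \<le> s then c s * S $$ (i, s-1) else 0) - c (s+1) * S $$ (i, s+1) = (\<Sum>r<N+1. S $$ (i,r) * Atilde N c $$ (r,s))"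
      using sum_col[OF oN that(2), of "\<lambda>r. S $$ (i,r)" c] by simp
    also have "\<dots> = (\<Sum>r<N+1. Atilde N c' $$ (i,r) * S $$ (r,s))" using EQ that by simp
    also have "\<dots> = (\<Sum>r<N+1. (if r = s then l s * Atilde N c' $$ (i,s) else 0))"
      using that by (intro sum.cong) auto
    also have "\<dots> = l s * Atilde N c' $$ (i,s)" using that by (simp add: sum.delta)
    finally show ?thesis .
  qed
  have c1: "c 1 = c' 1" and S1: "\<forall>i\<le>N. S $$ (i,1) = (if i = 1 then 1 else 0)"
  proof -
    have h0: "\<forall>r\<le>N. S $$ (r,0) = (if r = 0 then l 0 else 0)" using col0 unfolding l_def by simp
    have c1nz: "c 1 \<noteq> 0" using cnz by simp
    have X: "- c 1 * S $$ (i, 1) = l 0 * Atilde N c' $$ (i,0)" if "i \<le> N" for i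
      using CE[OF that _ h0] assms(2) by simp
    have l0: "l 0 = 1" using col0[of 0] unfolding l_def by simp
    have "- c 1 * S $$ (1, 1) = - c' 1" using X[of 1] l0 assms(2) At_entry[OF oN, of 1 0 c'] by simp
    then show "c 1 = c' 1" using row1[of 1] assms(2) by simp
    show "\<forall>i\<le>N. S $$ (i,1) = (if i = 1 then 1 else 0)"
    proof (intro allI impI)
      fix i assume i: "i \<le> N"
      show "S $$ (i,1) = (if i = 1 then 1 else 0)"
      proof (cases "i = 1")
        case True then show ?thesis using row1[of 1] assms(2) by simp
      next
        case False
        then have "Atilde N c' $$ (i,0) = 0" using At_entry[OF oN i, of 0 c'] assms(2) by simp
        then show ?thesis using X[OF i] c1nz False by simp
      qed
    qed
  qed
  define R where "R n \<longleftrightarrow> (\<forall>p\<le>n. \<forall>i\<le>N. S $$ (i,p) = (if i = p then l p else 0))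
      \<and> (\<forall>p\<le>n. l p = 1 \<or> l p = -1) \<and> (\<forall>q\<in>{1..n}. l q * c q = l (q-1) * c' q)
      \<and> l n * (\<Prod>i\<in>{2..n}. c i) = (\<Prod>i\<in>{2..n}. c' i)" for n
  have R1: "R 1"
  proof -
    have l0: "l 0 = 1" using col0[of 0] unfolding l_def by simp
    have l1: "l 1 = 1" using S1 assms(2) unfolding l_def by simp
    have "\<forall>p\<le>1. \<forall>i\<le>N. S $$ (i,p) = (if i = p then l p else 0)"
    proof (intro allI impI)
      fix p i assume "p \<le> (1::nat)" "i \<le> N"
      then show "S $$ (i,p) = (if i = p then l p else 0)"
        using col0 S1 l0 l1 by (cases p) auto
    qed
    moreover have "\<forall>p\<le>1. l p = 1 \<or> l p = -1" using l0 l1 by (auto simp: le_Suc_eq)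
    moreover have "\<forall>q\<in>{1..1}. l q * c q = l (q-1) * c' q" using l0 l1 c1 by simp
    ultimately show ?thesis unfolding R_def using l1 by simp
  qed
  have Rstep: "R (Suc n)" if RR: "R n" and n1: "1 \<le> n" and nN: "Suc n \<le> N - 1" for n
  proof -
    have H: "\<forall>p\<le>n. \<forall>i\<le>N. S $$ (i,p) = (if i = p then l p else 0)"
      and L: "\<forall>p\<le>n. l p = 1 \<or> l p = -1" and Q: "\<forall>q\<in>{1..n}. l q * c q = l (q-1) * c' q"
      and P: "l n * (\<Prod>i\<in>{2..n}. c i) = (\<Prod>i\<in>{2..n}. c' i)"
      using RR unfolding R_def by auto
    have hn: "\<forall>r\<le>N. S $$ (r,n) = (if r = n then l n else 0)" using H by simp
    have nN': "n < N" using nN by simp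
    have X: "c n * S $$ (i, n-1) - c (n+1) * S $$ (i, n+1) = l n * Atilde N c' $$ (i,n)" if "i \<le> N" for i
      using CE[OF that nN' hn] n1 by simp
    have cn1: "c (n+1) \<noteq> 0" using cnz nN by simp
    have Ln: "l n = 1 \<or> l n = -1" "l (n-1) = 1 \<or> l (n-1) = -1" using L by auto
    have Qn: "l n * c n = l (n-1) * c' n" using Q n1 by auto
    have key: "c n * l (n-1) = l n * c' n" using Ln Qn by auto
    have newcol: "\<forall>i\<le>N. S $$ (i,Suc n) = (if i = Suc n then l (Suc n) else 0)"
    proof (intro allI impI)
      fix i assume i: "i \<le> N"
      show "S $$ (i,Suc n) = (if i = Suc n then l (Suc n) else 0)"
      proof (cases "i = Suc n")
        case True then show ?thesis unfolding l_def by simp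
      next
        case F: False
        show ?thesis
        proof (cases "i = n - 1")
          case True
          have "Atilde N c' $$ (i,n) = c' n" using At_entry[OF oN i, of n c'] True n1 nN' by simp
          moreover have "S $$ (i, n-1) = l (n-1)" using H True i by simp
          ultimately show ?thesis using X[OF i] key cn1 F by simp
        next
          case False
          have "Atilde N c' $$ (i,n) = 0" using At_entry[OF oN i, of n c'] False F n1 nN' by auto
          moreover have "S $$ (i, n-1) = 0" using H False i by simp
          ultimately show ?thesis using X[OF i] cn1 F by simp
        qed
      qed
    qed
    have lrel: "l (Suc n) * c (Suc n) = l n * c' (Suc n)"
    proof -
      have i: "Suc n \<le> N" using nN by simp
      have "Atilde N c' $$ (Suc n,n) = - c' (Suc n)" using At_entry[OF oN i, of n c'] nN' by simp
      moreover have "S $$ (Suc n, n-1) = 0" using H i n1 by simp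
      moreover have "S $$ (Suc n, Suc n) = l (Suc n)" unfolding l_def by simp
      ultimately show ?thesis using X[OF i] by (simp add: mult.commute)
    qed
    have obsrel: "(\<Prod>i\<in>{2..n+1}. c i) = l (Suc n) * (\<Prod>i\<in>{2..n+1}. c' i)"
    proof -
      have mN: "n \<le> N - 2" using nN by simp
      have "ww N c n $ (n+1) = (transpose_mat S *\<^sub>v ww N c' n) $ (n+1)"
        using ww_rel[OF Sc assms(7,9)] by simp
      also have "\<dots> = (\<Sum>r<N+1. S $$ (r,n+1) * ww N c' n $ r)"
        using Tmult_comp[OF Sc, of "n+1" "ww N c' n"] nN by simp
      also have "\<dots> = (\<Sum>r<N+1. (if r = n+1 then l (Suc n) * ww N c' n $ (n+1) else 0))"
        using newcol by (intro sum.cong) auto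
      also have "\<dots> = l (Suc n) * ww N c' n $ (n+1)"
        using nN by (subst sum.delta) auto
      finally show ?thesis using obs[OF oN _ cnz mN] obs[OF oN _ c'nz mN] assms(2) by simp
    qed
    have P2: "l (Suc n) * (\<Prod>i\<in>{2..n+1}. c i) = (\<Prod>i\<in>{2..n+1}. c' i)"
    proof -
      have "l (Suc n) * (\<Prod>i\<in>{2..n+1}. c i) = (l (Suc n) * c (Suc n)) * (\<Prod>i\<in>{2..n}. c i)"
        using n1 by (simp add: prod.cl_ivl_Suc)
      also have "\<dots> = c' (Suc n) * (l n * (\<Prod>i\<in>{2..n}. c i))" using lrel by simp
      also have "\<dots> = (\<Prod>i\<in>{2..n+1}. c' i)" using P n1 by (simp add: prod.cl_ivl_Suc)
      finally show ?thesis .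
    qed
    have Pnz: "(\<Prod>i\<in>{2..n+1}. c i) \<noteq> 0" using cnz nN by (auto simp: prod_zero_iff)
    have "l (Suc n) * l (Suc n) = 1"
    proof -
      have "(\<Prod>i\<in>{2..n+1}. c i) = l (Suc n) * (l (Suc n) * (\<Prod>i\<in>{2..n+1}. c i))"
        using obsrel P2 by simp
      then show ?thesis using Pnz by (simp add: mult.assoc[symmetric])
    qed
    then have lS: "l (Suc n) = 1 \<or> l (Suc n) = -1" by (simp add: square_eq_1_iff)
    show ?thesis unfolding R_def
    proof (intro conjI)
      show "\<forall>p\<le>Suc n. \<forall>i\<le>N. S $$ (i,p) = (if i = p then l p else 0)"
        using H newcol by (auto simp: le_Suc_eq)
      show "\<forall>p\<le>Suc n. l p = 1 \<or> l p = -1" using L lS by (auto simp: le_Suc_eq)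
      show "\<forall>q\<in>{1..Suc n}. l q * c q = l (q-1) * c' q" using Q lrel by (auto simp: le_Suc_eq)
      show "l (Suc n) * (\<Prod>i\<in>{2..Suc n}. c i) = (\<Prod>i\<in>{2..Suc n}. c' i)" using P2 by simp
    qed
  qed
  have RN: "R n" if "1 \<le> n" "n \<le> N - 1" for n
    using that
  proof (induction n)
    case 0 then show ?case by simp
  next
    case (Suc n)
    show ?case
    proof (cases "n = 0")
      case True then show ?thesis using R1 by simp
    next
      case False then show ?thesis using Suc Rstep by simp
    qed
  qed
  have RF: "R (N-1)" using RN assms(2) by simp
  then have H: "\<forall>p\<le>N-1. \<forall>i\<le>N. S $$ (i,p) = (if i = p then l p else 0)"
      and L: "\<forall>p\<le>N-1. l p = 1 \<or> l p = -1" and Q: "\<forall>q\<in>{1..N-1}. l q * c q = l (q-1) * c' q"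
    unfolding R_def by auto
  have l0: "l 0 = 1" using col0[of 0] unfolding l_def by simp
  have l1: "l 1 = 1" using S1 assms(2) unfolding l_def by simp
  have colv: "col S p = l p \<cdot>\<^sub>v unit_vec (N+1) p" if "p \<le> N-1" for p
  proof (rule eq_vecI)
    show "dim_vec (col S p) = dim_vec (l p \<cdot>\<^sub>v unit_vec (N+1) p)" using Sc by (simp add: col_def)
    fix i assume "i < dim_vec (l p \<cdot>\<^sub>v unit_vec (N+1) p)"
    then have i: "i < N+1" by simp
    have p: "p < N+1" using that by simp
    show "col S p $ i = (l p \<cdot>\<^sub>v unit_vec (N+1) p) $ i"
      using H that i p Sc by auto
  qed
  have absq: "\<bar>c q\<bar> = \<bar>c' q\<bar>" if "1 \<le> q" "q \<le> N-1" for q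
  proof -
    have "\<bar>l q * c q\<bar> = \<bar>l (q-1) * c' q\<bar>" using Q that by simp
    moreover have "\<bar>l q\<bar> = 1" using L that by auto
    moreover have "l (q-1) = 1 \<or> l (q-1) = -1" using L that by (meson diff_le_self le_trans)
    then have "\<bar>l (q-1)\<bar> = 1" by auto
    ultimately show ?thesis by (simp add: abs_mult)
  qed
  show ?thesis
  proof (intro allI impI conjI)
    fix k assume k: "3 \<le> k \<and> k \<le> N - 1"
    show "col S 0 = unit_vec (N+1) 0" using colv[of 0] l0 by simp
    show "col S 1 = unit_vec (N+1) 1" using colv[of 1] l1 assms(2) by simp
    show "\<exists>\<epsilon> :: nat \<Rightarrow> real. \<forall>j\<in>{3..k}.
                 \<epsilon> j \<in> {1, -1} \<and> col S (j - 1) = \<epsilon> j \<cdot>\<^sub>v unit_vec (N+1) (j - 1)"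
    proof (rule exI[of _ "\<lambda>j. l (j-1)"], intro ballI conjI)
      fix j assume j: "j \<in> {3..k}"
      then have jj: "j - 1 \<le> N - 1" using k by auto
      show "l (j-1) \<in> {1, -1}" using L[rule_format, OF jj] by auto
      show "col S (j - 1) = l (j-1) \<cdot>\<^sub>v unit_vec (N+1) (j - 1)" using colv[OF jj] .
    qed
    show "c 1 = c' 1" by (rule c1)
    show "\<bar>c 2\<bar> = \<bar>c' 2\<bar>" using absq[of 2] assms(2) by simp
    show "\<forall>j\<in>{1..k-2}. \<bar>c (j+2)\<bar> = \<bar>c' (j+2)\<bar>" using absq k by auto
  qed
qed

end
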